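(* Let $\kappa=(k_0,k_1,k_2,\dots)$ be an infinite sequence of natural numbers with $k_i>1$ for all $i$, and let $\sigma\kappa=(k_1,k_2,\dots)$ denote its shift. Define $E_\kappa$ on finite sequences of natural numbers by $$E_\kappa([\,])=0,\qquad E_\kappa([x_0,x_1,\dots,x_m])=C_{k_0}\big(x_0,\,E_{\sigma\kappa}([x_1,\dots,x_m])\big).$$ Then $E_\kappa$ is a bijection from the set of finite sequences of natural numbers onto $\mathbb{N}$. In particular, for each $b>1$ the map $\mathrm{nats2nat}_b:=E_{(b,b,b,\dots)}$ is a bijection between finite sequences of naturals and $\mathbb{N}$. Its inverse $\mathrm{nat2nats}_b$ is given by $\mathrm{nat2nats}_b(0)=[\,]$ and, for $n>0$, $\mathrm{nat2nats}_b(n)=x:\mathrm{nat2nats}_b(y')$, where $(x,y')=C_b^{-1}(n)$.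
   Context: $\mathbb{N}=\{0,1,2,\dots\}$. For $b>1$, $C_b:\mathbb{N}\times\mathbb{N}\to\mathbb{N}\setminus\{0\}$ is defined by $C_b(x,y')=b^x\,(y'+\lfloor y'/(b-1)\rfloor+1)$. This map is a bijection; its first component is $x=\nu_b(n)$, the $b$-adic valuation of $n$. The notation $x:s$ denotes the sequence with first element $x$ followed by the sequence $s$. *)

theory Defs
  imports Main
begin

definition C :: "nat \<Rightarrow> nat \<Rightarrow> nat \<Rightarrow> nat" where
  "C b x y' = b ^ x * (y' + y' div (b - 1) + 1)"

definition C_inv :: "nat \<Rightarrow> nat \<Rightarrow> nat \<times> nat" where
  "C_inv b n = the_inv_into UNIV (\<lambda>(x, y'). C b x y') n"

primrec E :: "(nat \<Rightarrow> nat) \<Rightarrow> nat list \<Rightarrow> nat" where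
  "E \<kappa> [] = 0"
| "E \<kappa> (x # xs) = C (\<kappa> 0) x (E (\<lambda>i. \<kappa> (Suc i)) xs)"

definition nats2nat :: "nat \<Rightarrow> nat list \<Rightarrow> nat" where
  "nats2nat b = E (\<lambda>_. b)"

definition nat2nats :: "nat \<Rightarrow> nat \<Rightarrow> nat list" where
  "nat2nats b = inv (nats2nat b)"

end

theory Submission
  imports Defs
begin

definition g :: "nat \<Rightarrow> nat \<Rightarrow> nat" where
  "g b y = y + y div (b - 1) + 1"

lemma g_smono: "y < z \<Longrightarrow> g b y < g b z"
  unfolding g_def using div_le_mono[of y z "b-1"] by simp

lemma g_inj: "g b y = g b z \<Longrightarrow> y = z"
  by (metis g_smono linorder_neqE_nat less_irrefl)

lemma g_ndvd: assumes "b > 1" shows "\<not> b dvd g b y"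
proof
  assume d: "b dvd g b y"
  define q r where "q = y div (b-1)" and "r = y mod (b-1)"
  have y: "y = q*(b-1) + r" using q_def r_def by (metis div_mult_mod_eq)
  have r: "r < b - 1" using assms r_def by simp
  obtain c where c: "b = Suc c" using assms by (cases b) auto
  have "g b y = q*b + (r+1)" unfolding g_def using y q_def c by simp
  with d have "b dvd (q*b + (r+1))" by simp
  then have "b dvd (r+1)" by (metis add.commute dvd_add_times_triv_right_iff)
  moreover have "0 < r+1" "r + 1 < b" using r by auto
  ultimately show False by (simp add: nat_dvd_not_less)
qed

lemma g_surj: assumes "b > 1" "\<not> b dvd m" shows "\<exists>y. m = g b y"
proof -
  have mm: "m mod b \<ge> 1" using assms(2) by (metis dvd_eq_mod_eq_0 less_one not_le)
  define y where "y = (m div b)*(b-1) + (m mod b - 1)"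
  have lt: "m mod b - 1 < b - 1" using assms(1) mm mod_less_divisor[of b m] by linarith
  have "y div (b-1) = m div b" unfolding y_def using lt assms(1)
    by (simp add: div_add1_eq[symmetric])
  then have "g b y = (m div b)*(b-1) + (m mod b - 1) + m div b + 1" unfolding g_def y_def by simp
  also have "\<dots> = (m div b)*b + m mod b" using mm assms(1)
  proof -
    obtain c where c: "b = Suc c" using assms by (cases b) auto
    show ?thesis using mm unfolding c by simp
  qed
  also have "\<dots> = m" by simp
  finally show ?thesis by metis
qed

lemma C_g: "C b x y = b^x * g b y" unfolding C_def g_def by simp

lemma pow_ndvd_inj:
  fixes b m1 m2 :: nat
  assumes "b > 1" "\<not> b dvd m1" "\<not> b dvd m2" "b^x1 * m1 = b^x2 * m2"
  shows "x1 = x2 \<and> m1 = m2"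
  using assms(4)
proof (induction x1 arbitrary: x2)
  case 0
  then show ?case
  proof (cases x2)
    case (Suc k) with 0 have "m1 = b * (b^k * m2)" by (simp add: mult.assoc)
    with assms(2) show ?thesis by simp
  qed simp
next
  case (Suc x)
  show ?case
  proof (cases x2)
    case 0 with Suc.prems have "m2 = b * (b^x * m1)" by (simp add: mult.assoc)
    with assms(3) show ?thesis by simp
  next
    case (Suc k) with Suc.prems assms(1) have "b^x * m1 = b^k * m2" by simp
    then have "x = k \<and> m1 = m2" by (rule Suc.IH)
    then show ?thesis using \<open>x2 = Suc k\<close> by simp
  qed
qed

lemma C_inj: assumes "b > 1" "C b x1 y1 = C b x2 y2" shows "x1 = x2 \<and> y1 = y2"
  using pow_ndvd_inj[OF assms(1) g_ndvd[OF assms(1)] g_ndvd[OF assms(1)]] assms(2) g_inj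
  unfolding C_g by metis

lemma pow_decomp: fixes b n :: nat assumes "b > 1" "n > 0" shows "\<exists>x m. n = b^x * m \<and> \<not> b dvd m"
  using assms(2)
proof (induction n rule: less_induct)
  case (less n)
  show ?case
  proof (cases "b dvd n")
    case True
    then obtain n' where n': "n = b * n'" by auto
    with less.prems assms(1) have "n' > 0" "n' < n" by auto
    with less.IH obtain x m where "n' = b^x*m" "\<not> b dvd m" by blast
    with n' have "n = b^(Suc x) * m" by simp
    with \<open>\<not> b dvd m\<close> show ?thesis by blast
  next
    case False then have "n = b^0 * n" by simp
    with False show ?thesis by blast
  qed
qed

lemma C_surj: assumes "b > 1" "n > 0" shows "\<exists>x y. n = C b x y"
  using pow_decomp[OF assms] g_surj[OF assms(1)] unfolding C_g by metis

lemma C_pos: "b > 0 \<Longrightarrow> C b x y > 0" unfolding C_def by simp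

lemma C_gt: assumes "b > 1" shows "y < C b x y"
proof -
  have "y < g b y" unfolding g_def by simp
  also have "g b y \<le> b^x * g b y" using assms by simp
  finally show ?thesis unfolding C_g .
qed

lemma E_zero: "\<forall>i. \<kappa> i > 1 \<Longrightarrow> E \<kappa> xs = 0 \<longleftrightarrow> xs = []"
proof -
  assume "\<forall>i. \<kappa> i > 1"
  then have "\<kappa> 0 > 0" by (metis gr_implies_not0 neq0_conv)
  then show ?thesis using C_pos[of "\<kappa> 0"] by (cases xs) auto
qed

lemma E_inj: "\<forall>i. \<kappa> i > 1 \<Longrightarrow> E \<kappa> xs = E \<kappa> ys \<Longrightarrow> xs = ys"
proof (induction xs arbitrary: ys \<kappa>)
  case Nil
  then have "E \<kappa> ys = 0" by simp
  then show ?case using E_zero[OF Nil.prems(1)] by simp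
next
  case (Cons x xs)
  have k: "\<kappa> 0 > 1" using Cons.prems(1) by blast
  have k': "\<forall>i. (\<lambda>i. \<kappa> (Suc i)) i > 1" using Cons.prems(1) by blast
  show ?case
  proof (cases ys)
    case Nil
    then have "E \<kappa> (x#xs) = 0" using Cons.prems(2) by simp
    then show ?thesis using E_zero[OF Cons.prems(1)] by blast
  next
    case (Cons y ys')
    then have "C (\<kappa> 0) x (E (\<lambda>i. \<kappa> (Suc i)) xs) = C (\<kappa> 0) y (E (\<lambda>i. \<kappa> (Suc i)) ys')"
      using Cons.prems(2) by simp
    then have "x = y \<and> E (\<lambda>i. \<kappa> (Suc i)) xs = E (\<lambda>i. \<kappa> (Suc i)) ys'"
      by (rule C_inj[OF k])
    then have "x = y" "xs = ys'" using Cons.IH[OF k'] by auto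
    then show ?thesis using Cons by simp
  qed
qed

lemma E_surj: assumes "\<forall>i. \<kappa> i > 1" shows "\<exists>xs. n = E \<kappa> xs"
  using assms
proof (induction n arbitrary: \<kappa> rule: less_induct)
  case (less n)
  show ?case
  proof (cases "n = 0")
    case True then show ?thesis by (metis E.simps(1))
  next
    case False
    with C_surj[of "\<kappa> 0" n] less.prems obtain x y where n: "n = C (\<kappa> 0) x y" by auto
    with C_gt less.prems have "y < n" by auto
    with less.IH[of y "\<lambda>i. \<kappa> (Suc i)"] less.prems obtain ys where "y = E (\<lambda>i. \<kappa> (Suc i)) ys" by auto
    with n have "n = E \<kappa> (x # ys)" by simp
    then show ?thesis by blast
  qed
qed

lemma E_bij: assumes "\<forall>i. \<kappa> i > 1" shows "bij (E \<kappa>)"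
proof (rule bijI)
  show "inj (E \<kappa>)" unfolding inj_def using E_inj[OF assms] by blast
  show "surj (E \<kappa>)" unfolding surj_def using E_surj[OF assms] by blast
qed

lemma nats_bij: assumes b: "b > 1" shows "bij (nats2nat b)"
proof -
  have "\<forall>i. (\<lambda>_. b) i > 1" using b by simp
  then show ?thesis unfolding nats2nat_def by (rule E_bij)
qed

lemma cons: "nats2nat b (x # xs) = C b x (nats2nat b xs)"
  unfolding nats2nat_def by simp

lemma nat2nats_0: assumes b: "b > 1" shows "nat2nats b 0 = []"
proof -
  have inj: "inj (nats2nat b)" using nats_bij[OF b] by (rule bij_is_inj)
  have nil: "nats2nat b [] = 0" unfolding nats2nat_def by simp
  have "nat2nats b (nats2nat b []) = []" unfolding nat2nats_def using inj by (rule inv_f_f)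
  then show ?thesis unfolding nil .
qed

lemma nat2nats_pos: assumes b: "b > 1" and n: "n > 0"
  shows "nat2nats b n = fst (C_inv b n) # nat2nats b (snd (C_inv b n))"
proof -
  have inj: "inj (nats2nat b)" using nats_bij[OF b] by (rule bij_is_inj)
  have sj: "surj (nats2nat b)" using nats_bij[OF b] by (rule bij_is_surj)
  obtain x y where xy: "n = C b x y" using C_surj[OF b n] by blast
  have injC: "inj (\<lambda>(x, y'). C b x y')"
  proof (rule injI)
    fix p q :: "nat \<times> nat"
    assume h: "(\<lambda>(x, y'). C b x y') p = (\<lambda>(x, y'). C b x y') q"
    obtain p1 p2 q1 q2 where pq: "p = (p1, p2)" "q = (q1, q2)" by (cases p, cases q) 
    from h have "C b p1 p2 = C b q1 q2" unfolding pq by simp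
    then have "p1 = q1 \<and> p2 = q2" by (rule C_inj[OF b])
    then show "p = q" unfolding pq by simp
  qed
  have "the_inv_into UNIV (\<lambda>(x, y'). C b x y') ((\<lambda>(x, y'). C b x y') (x,y)) = (x, y)"
    using injC by (rule the_inv_into_f_f) simp
  then have ci: "C_inv b n = (x, y)" unfolding C_inv_def xy by simp
  have "nats2nat b (nat2nats b y) = y" unfolding nat2nats_def using sj by (rule surj_f_inv_f)
  then have "nats2nat b (x # nat2nats b y) = n" unfolding cons xy by simp
  then have "nat2nats b (nats2nat b (x # nat2nats b y)) = nat2nats b n" by simp
  then have "nat2nats b n = x # nat2nats b y" unfolding nat2nats_def using inv_f_f[OF inj] by simp
  then show ?thesis using ci by simp
qed

theorem mainTheorem3:
  shows "(\<forall>\<kappa> :: nat \<Rightarrow> nat. (\<forall>i. \<kappa> i > 1) \<longrightarrow> bij (E \<kappa>))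
    \<and> (\<forall>b :: nat. b > 1 \<longrightarrow>
         bij (nats2nat b)
       \<and> nat2nats b 0 = []
       \<and> (\<forall>n > 0. nat2nats b n = fst (C_inv b n) # nat2nats b (snd (C_inv b n))))"
  using E_bij nats_bij nat2nats_0 nat2nats_pos by blast

end
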